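(* Let $m\in\mathbb{N}$, $x_1,\ldots,x_m\in\mathcal{X}$ fixed, $B\ge1$, $Y_1,\ldots,Y_m$ independent real random variables with values in $[-B,B]$, $\eta_t=\mathbb{E}[Y_t]$. For $i\in\{1,2\}$, $t\in\{1,\ldots,m+1\}$, $q\in[0,\infty)$, let $\mathcal{H}^{(q)}_{i,t}$ be a set of functions $\mathcal{X}\to[-B,B]$, nondecreasing in $q$ (i.e. $\mathcal{H}^{(q)}_{i,t}\subseteq\mathcal{H}^{(q')}_{i,t}$ for $q<q'$), and let $\mathrm{pen}_i(q,t)\in[0,\infty)$. Let $\rho_m(h,g)=\max_{1\le s\le m}|h(x_s)-g(x_s)|$, and for $\epsilon>0$ let $N_i(\epsilon,q)$ be any number with $N_i(\epsilon,q)\ge\max_{t\in\{1,\ldots,m+1\}}|\mathcal{H}^{(q)}_{i,t,\epsilon}|$, where $\mathcal{H}^{(q)}_{i,t,\epsilon}$ is a minimal $\epsilon$-cover of $\mathcal{H}^{(q)}_{i,t}$ w.r.t. $\rho_m$ (assumed finite). Let $\epsilon_i(q)\in(0,B]$ satisfy $\epsilon_i(q)\le B\sqrt{\ln(N_i(\epsilon_i(q),q))/m}$, and write $N_i(q)=N_i(\epsilon_i(q),q)$. With $R^*,\hat R$ as defined below, let $(\hat h_1,\hat h_2,\hat t,\hat q_1,\hat q_2)$ minimize $m\hat R(h_1,h_2,t_0)+\mathrm{pen}_1(q_1,t_0)+\mathrm{pen}_2(q_2,t_0)$ and $(h_1^*,h_2^*,t^*,q_1^*,q_2^* )$ minimize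 $mR^*(h_1,h_2,t_0)+\mathrm{pen}_1(q_1,t_0)+\mathrm{pen}_2(q_2,t_0)$, both over all $(h_1,h_2,t_0,q_1,q_2)$ with $t_0\in\{1,\ldots,m+1\}$, $q_1,q_2\in[0,\infty)$, $h_1\in\mathcal{H}^{(q_1)}_{1,t_0}$, $h_2\in\mathcal{H}^{(q_2)}_{2,t_0}$ (minimizers assumed to exist). Then for every $\delta\in(0,1)$, with probability at least $1-\delta$, $$R^*(\hat h_1,\hat h_2,\hat t)\le R^*(h_1^*,h_2^*,t^* )+\frac{\mathrm{pen}_1(q_1^*,t^* )+\mathrm{pen}_2(q_2^*,t^* )}{m}+22B^2\sqrt{\frac{2\ln\big(\tfrac{2(m+1)}{\delta}\big)+\sum_{i=1}^2\sum_{q\in\{\hat q_i,q_i^*\}}\ln\big((q+3)^2N_i(\lceil q\rceil)\big)}{m}}.$$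
   Context: For $t_0\in\{1,\ldots,m+1\}$ and functions $h_1,h_2:\mathcal{X}\to[-B,B]$: $R^*(h_1,h_2,t_0)=\frac1m\big(\sum_{t=1}^{t_0-1}(h_1(x_t)-\eta_t)^2+\sum_{t=t_0}^m(h_2(x_t)-\eta_t)^2\big)$ and $\hat R(h_1,h_2,t_0)$ is the same with $Y_t$ in place of $\eta_t$; empty sums are $0$. An $\epsilon$-cover of a set $\mathcal{H}$ w.r.t. $\rho_m$ is a set $C\subseteq\mathcal{H}$ such that every $h\in\mathcal{H}$ has some $g\in C$ with $\rho_m(h,g)\le\epsilon$; minimal means of smallest cardinality. *)

theory Defs
  imports "HOL-Probability.Probability"
begin

definition rho_m :: "nat \<Rightarrow> (nat \<Rightarrow> 'x) \<Rightarrow> ('x \<Rightarrow> real) \<Rightarrow> ('x \<Rightarrow> real) \<Rightarrow> real" where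
  "rho_m m x h g = (MAX s\<in>{1..m}. \<bar>h (x s) - g (x s)\<bar>)"

definition is_cover :: "nat \<Rightarrow> (nat \<Rightarrow> 'x) \<Rightarrow> real \<Rightarrow> ('x \<Rightarrow> real) set \<Rightarrow> ('x \<Rightarrow> real) set \<Rightarrow> bool" where
  "is_cover m x eps H C \<longleftrightarrow> C \<subseteq> H \<and> (\<forall>h\<in>H. \<exists>g\<in>C. rho_m m x h g \<le> eps)"

definition min_cover_card :: "nat \<Rightarrow> (nat \<Rightarrow> 'x) \<Rightarrow> real \<Rightarrow> ('x \<Rightarrow> real) set \<Rightarrow> nat" where
  "min_cover_card m x eps H = (LEAST n. \<exists>C. is_cover m x eps H C \<and> finite C \<and> card C = n)"

text \<open>Piecewise risk with targets f: (1/m)(sum_{t<t0} (h1(x_t)-f_t)^2 + sum_{t0<=t<=m} (h2(x_t)-f_t)^2).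
  R^* is risk m x eta, and hat R is risk m x (Y . omega).\<close>
definition risk :: "nat \<Rightarrow> (nat \<Rightarrow> 'x) \<Rightarrow> (nat \<Rightarrow> real) \<Rightarrow> ('x \<Rightarrow> real) \<Rightarrow> ('x \<Rightarrow> real) \<Rightarrow> nat \<Rightarrow> real" where
  "risk m x f h1 h2 t0 = (1 / real m) * ((\<Sum>t\<in>{1..<t0}. (h1 (x t) - f t)^2) + (\<Sum>t\<in>{t0..m}. (h2 (x t) - f t)^2))"

definition feasible :: "nat \<Rightarrow> (nat \<Rightarrow> nat \<Rightarrow> real \<Rightarrow> ('x \<Rightarrow> real) set) \<Rightarrow> ('x \<Rightarrow> real) \<Rightarrow> ('x \<Rightarrow> real) \<Rightarrow> nat \<Rightarrow> real \<Rightarrow> real \<Rightarrow> bool" where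
  "feasible m H h1 h2 t0 q1 q2 \<longleftrightarrow> t0 \<in> {1..m+1} \<and> 0 \<le> q1 \<and> 0 \<le> q2 \<and> h1 \<in> H 1 t0 q1 \<and> h2 \<in> H 2 t0 q2"

definition objective :: "nat \<Rightarrow> (nat \<Rightarrow> 'x) \<Rightarrow> (nat \<Rightarrow> real) \<Rightarrow> (nat \<Rightarrow> real \<Rightarrow> nat \<Rightarrow> real) \<Rightarrow> ('x \<Rightarrow> real) \<Rightarrow> ('x \<Rightarrow> real) \<Rightarrow> nat \<Rightarrow> real \<Rightarrow> real \<Rightarrow> real" where
  "objective m x f pen h1 h2 t0 q1 q2 = real m * risk m x f h1 h2 t0 + pen 1 q1 t0 + pen 2 q2 t0"

end

theory Submission
  imports Defs "HOL-Probability.Probability"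
begin


lemma (in prob_space) hoeff_single:
  fixes Y :: "nat \<Rightarrow> 'a \<Rightarrow> real" and g :: "'x \<Rightarrow> real" and x :: "nat \<Rightarrow> 'x"
  assumes fin: "finite I" and ind: "indep_vars (\<lambda>_. borel) Y J" and IJ: "I \<subseteq> J"
    and Yb: "\<And>t \<omega>. t \<in> I \<Longrightarrow> \<omega> \<in> space M \<Longrightarrow> \<bar>Y t \<omega>\<bar> \<le> B"
    and gb: "\<And>z. \<bar>g z\<bar> \<le> B" and B: "B > 0" and cI: "card I \<le> m" and m: "m > 0" and l: "l > 0"
  shows "prob {\<omega>\<in>space M. B\<^sup>2 * sqrt (2 * real m * l) \<le> \<bar>(\<Sum>t\<in>I. g (x t) * Y t \<omega>) - (\<Sum>t\<in>I. g (x t) * expectation (Y t))\<bar>} \<le> 2 * exp (- l)"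
proof (cases "I = {}")
  case True
  have "B\<^sup>2 * sqrt (2 * real m * l) > 0" using B m l by simp
  then show ?thesis using True by simp
next
  case False
  let ?X = "\<lambda>t \<omega>. g (x t) * Y t \<omega>"
  have ind2: "indep_vars (\<lambda>_. borel) ?X I"
    by (rule indep_vars_compose2[where X=Y and M'="\<lambda>_. borel"]) (auto intro: indep_vars_subset[OF ind IJ])
  interpret H: Hoeffding_ineq M I ?X "\<lambda>_. - (B\<^sup>2)" "\<lambda>_. B\<^sup>2" "\<Sum>t\<in>I. expectation (?X t)"
  proof unfold_locales
    show "finite I" by fact
    show "indep_vars (\<lambda>_. borel) ?X I" by fact
    fix i assume i: "i \<in> I"
    show "AE xa in M. ?X i xa \<in> {- (B\<^sup>2)..B\<^sup>2}"
    proof (rule AE_I2)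
      fix w assume w: "w \<in> space M"
      have "\<bar>?X i w\<bar> \<le> B * B" unfolding abs_mult
        using gb[of "x i"] Yb[OF i w] B by (intro mult_mono) auto
      then show "?X i w \<in> {- (B\<^sup>2)..B\<^sup>2}" by (auto simp: power2_eq_square abs_le_iff)
    qed
  qed simp
  have cpos: "card I > 0" using False fin by auto
  have S: "(\<Sum>i\<in>I. (B\<^sup>2 - - (B\<^sup>2))\<^sup>2) = real (card I) * (4 * B^4)"
    by (simp add: power2_eq_square power4_eq_xxxx algebra_simps)
  have Spos: "(\<Sum>i\<in>I. (B\<^sup>2 - - (B\<^sup>2))\<^sup>2) > 0" unfolding S using cpos B by simp
  have mu: "(\<Sum>t\<in>I. expectation (?X t)) = (\<Sum>t\<in>I. g (x t) * expectation (Y t))" by simp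
  have "prob {\<omega>\<in>space M. B\<^sup>2 * sqrt (2 * real m * l) \<le> \<bar>(\<Sum>t\<in>I. ?X t \<omega>) - (\<Sum>t\<in>I. expectation (?X t))\<bar>}
        \<le> 2 * exp (-2 * (B\<^sup>2 * sqrt (2 * real m * l))\<^sup>2 / (\<Sum>i\<in>I. (B\<^sup>2 - - (B\<^sup>2))\<^sup>2))"
    by (rule H.Hoeffding_ineq_abs_ge) (use B m l Spos in auto)
  also have "-2 * (B\<^sup>2 * sqrt (2 * real m * l))\<^sup>2 / (\<Sum>i\<in>I. (B\<^sup>2 - - (B\<^sup>2))\<^sup>2) = - (real m * l / real (card I))"
    unfolding S using B m l cpos by (simp add: power_mult_distrib field_simps)
  also have "- (real m * l / real (card I)) \<le> - l"
  proof -
    have "l \<le> real m * l / real (card I)" using cI cpos l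
      by (simp add: field_simps mult_right_mono)
    then show ?thesis by simp
  qed
  hence "2 * exp (- (real m * l / real (card I))) \<le> 2 * exp (- l)" by simp
  finally show ?thesis unfolding mu .
qed



lemma sq_ident: "((a::real) - e)^2 = (a - y)^2 - (y^2 - e^2) + 2*(a*(y-e))"
  by (simp add: power2_eq_square algebra_simps)

lemma sum_sq_ident: "(\<Sum>t\<in>S. ((h t::real) - e t)^2) = (\<Sum>t\<in>S. (h t - y t)^2) - (\<Sum>t\<in>S. y t^2 - e t^2) + 2*(\<Sum>t\<in>S. h t*(y t - e t))"
proof -
  have "(\<Sum>t\<in>S. ((h t::real) - e t)^2) = (\<Sum>t\<in>S. (h t - y t)^2 - (y t^2 - e t^2) + 2*(h t*(y t - e t)))"
    by (intro sum.cong refl) (rule sq_ident)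
  also have "\<dots> = (\<Sum>t\<in>S. (h t - y t)^2) - (\<Sum>t\<in>S. y t^2 - e t^2) + 2*(\<Sum>t\<in>S. h t*(y t - e t))"
    by (simp only: sum.distrib sum_subtractf sum_distrib_left)
  finally show ?thesis .
qed

lemma split_1m: fixes m t0 :: nat assumes "t0 \<in> {1..m+1}" shows "(\<Sum>t\<in>{1..m}. f t) = (\<Sum>t\<in>{1..<t0}. f t) + (\<Sum>t\<in>{t0..m}. (f t::real))"
proof -
  have "{1..m} = {1..<t0} \<union> {t0..m}" using assms by (simp add: set_eq_iff; arith)
  then have "sum f {1..m} = sum f ({1..<t0} \<union> {t0..m})" by simp
  also have "\<dots> = sum f {1..<t0} + sum f {t0..m}" by (rule sum.union_disjoint) auto
  finally show ?thesis .
qed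

lemma lin_aux: fixes a b c d f g :: real shows "a - b + 2*c + (d - f + 2*g) = a + d - (b + f) + 2*(c+g)"
  by (simp add: algebra_simps)

lemma risk_decomp:
  assumes m: "m > 0" and t0: "t0 \<in> {1..m+1}"
  shows "real m * risk m x e h1 h2 t0 = real m * risk m x y h1 h2 t0 - (\<Sum>t\<in>{1..m}. y t^2 - e t^2)
     + 2*((\<Sum>t\<in>{1..<t0}. h1 (x t)*(y t - e t)) + (\<Sum>t\<in>{t0..m}. h2 (x t)*(y t - e t)))"
proof -
  have mr: "real m * risk m x f h1 h2 t0 = (\<Sum>t\<in>{1..<t0}. (h1 (x t) - f t)^2) + (\<Sum>t\<in>{t0..m}. (h2 (x t) - f t)^2)" for f
    using m unfolding risk_def by simp
  have a: "(\<Sum>t\<in>{1..<t0}. (h1 (x t) - e t)^2) = (\<Sum>t\<in>{1..<t0}. (h1 (x t) - y t)^2) - (\<Sum>t\<in>{1..<t0}. y t^2 - e t^2) + 2*(\<Sum>t\<in>{1..<t0}. h1 (x t)*(y t - e t))"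
    by (rule sum_sq_ident)
  have b: "(\<Sum>t\<in>{t0..m}. (h2 (x t) - e t)^2) = (\<Sum>t\<in>{t0..m}. (h2 (x t) - y t)^2) - (\<Sum>t\<in>{t0..m}. y t^2 - e t^2) + 2*(\<Sum>t\<in>{t0..m}. h2 (x t)*(y t - e t))"
    by (rule sum_sq_ident)
  have c: "(\<Sum>t\<in>{1..m}. y t^2 - e t^2) = (\<Sum>t\<in>{1..<t0}. y t^2 - e t^2) + (\<Sum>t\<in>{t0..m}. y t^2 - e t^2)"
    by (rule split_1m[OF t0])
  show ?thesis unfolding mr a b c by (rule lin_aux)
qed

lemma approx:
  fixes h g :: "'x \<Rightarrow> real"
  assumes I: "I \<subseteq> {1..m}" and rho: "rho_m m x h g \<le> \<epsilon>" and d: "\<And>t. t \<in> I \<Longrightarrow> \<bar>d t\<bar> \<le> 2 * B"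
    and B: "B \<ge> 0"
  shows "\<bar>\<Sum>t\<in>I. h (x t) * d t\<bar> \<le> \<bar>\<Sum>t\<in>I. g (x t) * d t\<bar> + real m * \<epsilon> * (2 * B)"
proof -
  have fin: "finite I" using I finite_subset by blast
  have e0: "real m * \<epsilon> \<ge> 0"
  proof (cases "m = 0")
    case False
    then have "\<bar>h (x 1) - g (x 1)\<bar> \<le> rho_m m x h g" unfolding rho_m_def by (intro Max_ge) auto
    then show ?thesis using rho by simp
  qed simp
  have "(\<Sum>t\<in>I. h (x t) * d t) = (\<Sum>t\<in>I. g (x t) * d t) + (\<Sum>t\<in>I. (h (x t) - g (x t)) * d t)"
    by (simp add: sum.distrib[symmetric] algebra_simps)
  also have "\<bar>\<dots>\<bar> \<le> \<bar>\<Sum>t\<in>I. g (x t) * d t\<bar> + \<bar>\<Sum>t\<in>I. (h (x t) - g (x t)) * d t\<bar>" by (rule abs_triangle_ineq)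
  also have "\<bar>\<Sum>t\<in>I. (h (x t) - g (x t)) * d t\<bar> \<le> (\<Sum>t\<in>I. \<epsilon> * (2 * B))"
  proof -
    have "\<bar>\<Sum>t\<in>I. (h (x t) - g (x t)) * d t\<bar> \<le> (\<Sum>t\<in>I. \<bar>(h (x t) - g (x t)) * d t\<bar>)" by (rule sum_abs)
    also have "\<dots> \<le> (\<Sum>t\<in>I. \<epsilon> * (2 * B))"
    proof (rule sum_mono)
      fix t assume t: "t \<in> I"
      have "\<bar>h (x t) - g (x t)\<bar> \<le> rho_m m x h g" using I t unfolding rho_m_def by (intro Max_ge) auto
      then have "\<bar>h (x t) - g (x t)\<bar> \<le> \<epsilon>" using rho by linarith
      then show "\<bar>(h (x t) - g (x t)) * d t\<bar> \<le> \<epsilon> * (2 * B)" unfolding abs_mult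
        by (intro mult_mono d t) auto
    qed
    finally show ?thesis .
  qed
  also have "(\<Sum>t\<in>I. \<epsilon> * (2 * B)) \<le> real m * \<epsilon> * (2 * B)"
  proof (cases "I = {}")
    case True then show ?thesis using e0 B by simp
  next
    case False
    have "card I \<le> m" using card_mono[OF _ I] by simp
    then have "real (card I) * \<epsilon> \<le> real m * \<epsilon>" 
    proof (cases "\<epsilon> \<ge> 0")
      case True then show ?thesis using \<open>card I \<le> m\<close> by (intro mult_right_mono) auto
    next
      case False
      then have "real m \<le> 0" using e0 by (simp add: zero_le_mult_iff)
      then show ?thesis using \<open>card I \<le> m\<close> by simp
    qed
    then show ?thesis using B by (simp add: mult_left_mono mult.commute mult.left_commute)
  qed
  finally show ?thesis by simp
qed

lemma mult_cancel_frac_aux: fixes a X d :: real assumes "a \<noteq> 0" shows "a*(d/(a*X)) = d * (1/X)"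
  using assms by (simp add: field_simps)

lemma div_step: fixes m a b p z :: real assumes m: "m > 0" and h: "m*a \<le> m*b + p + 2*z"
  shows "a \<le> b + p/m + 2/m*z"
proof -
  have "a \<le> (m*b + p + 2*z)/m" using h m by (simp add: pos_le_divide_eq mult.commute)
  also have "\<dots> = b + p/m + 2/m*z" using m by (simp add: field_simps)
  finally show ?thesis .
qed

lemma tele: "(\<Sum>k<K. 1 / (real k + 2)^2) \<le> 1 - 1 / (real K + 1)"
proof (induction K)
  case 0 then show ?case by simp
next
  case (Suc K)
  have e: "1/(real K+1) - 1/(real K+2) = 1/((real K+1)*(real K+2))" by (simp add: field_simps)
  have "1/(real K+2)^2 \<le> 1/((real K+1)*(real K+2))"
    by (rule divide_left_mono) (auto simp: power2_eq_square)
  then show ?case using Suc e by (simp add: add.commute)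
qed



lemma cs4: assumes "a \<ge> 0" "b \<ge> 0" "c \<ge> 0" "d \<ge> (0::real)"
  shows "sqrt a + sqrt b + sqrt c + sqrt d \<le> 2 * sqrt (a + b + c + d)"
proof -
  define u v w z where "u = sqrt a" "v = sqrt b" "w = sqrt c" "z = sqrt d"
  have sq: "a = u^2" "b = v^2" "c = w^2" "d = z^2" using assms unfolding u_v_w_z_def by auto
  have "(u+v+w+z)^2 \<le> 4*(u^2+v^2+w^2+z^2)"
  proof -
    have "4*(u^2+v^2+w^2+z^2) - (u+v+w+z)^2 = (u-v)^2+(u-w)^2+(u-z)^2+(v-w)^2+(v-z)^2+(w-z)^2"
      by (simp add: power2_eq_square algebra_simps)
    moreover have "(u-v)^2+(u-w)^2+(u-z)^2+(v-w)^2+(v-z)^2+(w-z)^2 \<ge> 0" by simp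
    ultimately show ?thesis by linarith
  qed
  then have "u+v+w+z \<le> sqrt (4*(u^2+v^2+w^2+z^2))" by (rule real_le_rsqrt)
  also have "\<dots> = sqrt 4 * sqrt (u^2+v^2+w^2+z^2)" by (simp only: real_sqrt_mult)
  also have "sqrt 4 = (2::real)" by (rule real_sqrt_unique) auto
  finally have "u+v+w+z \<le> 2 * sqrt (u^2+v^2+w^2+z^2)" .
  also have "\<dots> = 2 * sqrt (a+b+c+d)" using sq by simp
  finally show ?thesis unfolding u_v_w_z_def .
qed

lemma final_arith:
  fixes m B lam S :: real
  assumes m: "m > 0" and B: "B > 0" and lam: "lam \<ge> ln 2"
    and e1: "e1 \<le> ln 2 + lam + L1" and e2: "e2 \<le> ln 2 + lam + L2" and e3: "e3 \<le> ln 2 + lam + L3" and e4: "e4 \<le> ln 2 + lam + L4"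
    and n1: "0 \<le> n1" "n1 \<le> L1" and n2: "0 \<le> n2" "n2 \<le> L2" and n3: "0 \<le> n3" "n3 \<le> L3" and n4: "0 \<le> n4" "n4 \<le> L4"
    and S: "S = 2 * lam + (L1 + L2 + L3 + L4)"
  shows "2 / m * ((B^2 * sqrt (2 * m * e1) + 2 * B^2 * sqrt (m * n1)) + (B^2 * sqrt (2 * m * e2) + 2 * B^2 * sqrt (m * n2))
     + (B^2 * sqrt (2 * m * e3) + 2 * B^2 * sqrt (m * n3)) + (B^2 * sqrt (2 * m * e4) + 2 * B^2 * sqrt (m * n4)))
     \<le> 22 * B^2 * sqrt (S / m)"
proof -
  have l2: "ln 2 \<ge> (0::real)" by simp
  have Sge: "S \<ge> 0" using S lam l2 n1 n2 n3 n4 by linarith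
  have eS: "2 * m * e \<le> 2 * (m * S)" if "e \<le> ln 2 + lam + L" "L \<le> L1 + L2 + L3 + L4" for e L
  proof -
    have "e \<le> S" using that S lam by linarith
    then show ?thesis using m by simp
  qed
  have sq2: "sqrt (2::real) \<le> 3/2" proof -
    have "sqrt (2::real) \<le> sqrt ((3/2)^2)" by (rule real_sqrt_le_mono) (simp add: power2_eq_square)
    then show ?thesis by simp
  qed
  have se: "sqrt (2 * m * e) \<le> 3/2 * sqrt (m * S)" if "e \<le> ln 2 + lam + L" "L \<le> L1 + L2 + L3 + L4" for e L
  proof -
    have "sqrt (2 * m * e) \<le> sqrt (2 * (m * S))" using eS[OF that] by simp
    also have "\<dots> = sqrt 2 * sqrt (m * S)" by (simp add: real_sqrt_mult)
    also have "\<dots> \<le> 3/2 * sqrt (m * S)" using sq2 Sge m by (intro mult_right_mono) auto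
    finally show ?thesis .
  qed
  have E: "sqrt (2*m*e1) + sqrt (2*m*e2) + sqrt (2*m*e3) + sqrt (2*m*e4) \<le> 6 * sqrt (m * S)"
    using se[OF e1] se[OF e2] se[OF e3] se[OF e4] n1 n2 n3 n4 by linarith
  have "sqrt (m*n1) + sqrt (m*n2) + sqrt (m*n3) + sqrt (m*n4) \<le> 2 * sqrt (m*n1 + m*n2 + m*n3 + m*n4)"
    using m n1 n2 n3 n4 by (intro cs4) auto
  also have "\<dots> \<le> 2 * sqrt (m * S)"
  proof -
    have "m*n1 + m*n2 + m*n3 + m*n4 \<le> m * S"
    proof -
      have "n1+n2+n3+n4 \<le> S" using n1 n2 n3 n4 S lam l2 by linarith
      then have "m*(n1+n2+n3+n4) \<le> m * S" using m by simp
      then show ?thesis by (simp add: algebra_simps)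
    qed
    then show ?thesis by simp
  qed
  finally have NN: "sqrt (m*n1) + sqrt (m*n2) + sqrt (m*n3) + sqrt (m*n4) \<le> 2 * sqrt (m * S)" .
  have "((B^2 * sqrt (2 * m * e1) + 2 * B^2 * sqrt (m * n1)) + (B^2 * sqrt (2 * m * e2) + 2 * B^2 * sqrt (m * n2))
     + (B^2 * sqrt (2 * m * e3) + 2 * B^2 * sqrt (m * n3)) + (B^2 * sqrt (2 * m * e4) + 2 * B^2 * sqrt (m * n4)))
     = B^2 * ((sqrt (2*m*e1) + sqrt (2*m*e2) + sqrt (2*m*e3) + sqrt (2*m*e4)) + 2 * (sqrt (m*n1) + sqrt (m*n2) + sqrt (m*n3) + sqrt (m*n4)))"
    by (simp add: algebra_simps)
  also have "\<dots> \<le> B^2 * (6 * sqrt (m * S) + 2 * (2 * sqrt (m * S)))"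
    using E NN B by (intro mult_left_mono) auto
  also have "\<dots> = 10 * B^2 * sqrt (m * S)" by simp
  finally have T: "((B^2 * sqrt (2 * m * e1) + 2 * B^2 * sqrt (m * n1)) + (B^2 * sqrt (2 * m * e2) + 2 * B^2 * sqrt (m * n2))
     + (B^2 * sqrt (2 * m * e3) + 2 * B^2 * sqrt (m * n3)) + (B^2 * sqrt (2 * m * e4) + 2 * B^2 * sqrt (m * n4))) \<le> 10 * B^2 * sqrt (m * S)" .
  have mS: "sqrt (m * S) = m * sqrt (S / m)"
  proof -
    have "m * S = m^2 * (S / m)" using m by (simp add: power2_eq_square)
    then have "sqrt (m * S) = sqrt (m^2) * sqrt (S / m)" by (simp only: real_sqrt_mult)
    then show ?thesis using m by simp
  qed
  have "2 / m * ((B^2 * sqrt (2 * m * e1) + 2 * B^2 * sqrt (m * n1)) + (B^2 * sqrt (2 * m * e2) + 2 * B^2 * sqrt (m * n2))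
     + (B^2 * sqrt (2 * m * e3) + 2 * B^2 * sqrt (m * n3)) + (B^2 * sqrt (2 * m * e4) + 2 * B^2 * sqrt (m * n4))) \<le> 2 / m * (10 * B^2 * sqrt (m * S))" 
    by (rule mult_left_mono[OF T]) (use m in simp)
  also have "\<dots> = 20 * B^2 * sqrt (S / m)" unfolding mS using m by simp
  also have "\<dots> \<le> 22 * B^2 * sqrt (S / m)" using Sge m by (intro mult_right_mono) auto
  finally show ?thesis .
qed



theorem theoremA1:
  fixes M :: "'w measure"
    and m :: nat and x :: "nat \<Rightarrow> 'x" and B :: real
    and Y :: "nat \<Rightarrow> 'w \<Rightarrow> real" and \<eta> :: "nat \<Rightarrow> real"
    and H :: "nat \<Rightarrow> nat \<Rightarrow> real \<Rightarrow> ('x \<Rightarrow> real) set"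
    and pen :: "nat \<Rightarrow> real \<Rightarrow> nat \<Rightarrow> real"
    and N :: "nat \<Rightarrow> real \<Rightarrow> real \<Rightarrow> real"
    and eps :: "nat \<Rightarrow> real \<Rightarrow> real"
    and hh1 hh2 :: "'w \<Rightarrow> 'x \<Rightarrow> real" and ht :: "'w \<Rightarrow> nat" and hq1 hq2 :: "'w \<Rightarrow> real"
    and hs1 hs2 :: "'x \<Rightarrow> real" and ts :: nat and qs1 qs2 :: real
    and \<delta> :: real
  assumes M: "prob_space M"
    and B: "B \<ge> 1"
    and indep: "prob_space.indep_vars M (\<lambda>_. borel) Y {1..m}"
    and Ybound: "\<And>t \<omega>. t \<in> {1..m} \<Longrightarrow> \<omega> \<in> space M \<Longrightarrow> Y t \<omega> \<in> {-B..B}"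
    and eta: "\<And>t. t \<in> {1..m} \<Longrightarrow> \<eta> t = prob_space.expectation M (Y t)"
    and Hrange: "\<And>i t q h z. i \<in> {1,2} \<Longrightarrow> t \<in> {1..m+1} \<Longrightarrow> q \<ge> 0 \<Longrightarrow> h \<in> H i t q \<Longrightarrow> h z \<in> {-B..B}"
    and Hmono: "\<And>i t q q'. i \<in> {1,2} \<Longrightarrow> t \<in> {1..m+1} \<Longrightarrow> 0 \<le> q \<Longrightarrow> q < q' \<Longrightarrow> H i t q \<subseteq> H i t q'"
    and pen_nonneg: "\<And>i q t. i \<in> {1,2} \<Longrightarrow> t \<in> {1..m+1} \<Longrightarrow> q \<ge> 0 \<Longrightarrow> pen i q t \<ge> 0"
    and cover_finite: "\<And>i t q e. i \<in> {1,2} \<Longrightarrow> t \<in> {1..m+1} \<Longrightarrow> q \<ge> 0 \<Longrightarrow> e > 0 \<Longrightarrow>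
        \<exists>C. is_cover m x e (H i t q) C \<and> finite C"
    and N_ge: "\<And>i t q e. i \<in> {1,2} \<Longrightarrow> t \<in> {1..m+1} \<Longrightarrow> q \<ge> 0 \<Longrightarrow> e > 0 \<Longrightarrow>
        real (min_cover_card m x e (H i t q)) \<le> N i e q"
    and eps_pos: "\<And>i q. i \<in> {1,2} \<Longrightarrow> q \<ge> 0 \<Longrightarrow> 0 < eps i q \<and> eps i q \<le> B"
    and eps_le: "\<And>i q. i \<in> {1,2} \<Longrightarrow> q \<ge> 0 \<Longrightarrow> eps i q \<le> B * sqrt (ln (N i (eps i q) q) / real m)"
    and hat_feas: "\<And>\<omega>. \<omega> \<in> space M \<Longrightarrow> feasible m H (hh1 \<omega>) (hh2 \<omega>) (ht \<omega>) (hq1 \<omega>) (hq2 \<omega>)"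
    and hat_min: "\<And>\<omega> h1 h2 t0 q1 q2. \<omega> \<in> space M \<Longrightarrow> feasible m H h1 h2 t0 q1 q2 \<Longrightarrow>
        objective m x (\<lambda>t. Y t \<omega>) pen (hh1 \<omega>) (hh2 \<omega>) (ht \<omega>) (hq1 \<omega>) (hq2 \<omega>)
          \<le> objective m x (\<lambda>t. Y t \<omega>) pen h1 h2 t0 q1 q2"
    and star_feas: "feasible m H hs1 hs2 ts qs1 qs2"
    and star_min: "\<And>h1 h2 t0 q1 q2. feasible m H h1 h2 t0 q1 q2 \<Longrightarrow>
        objective m x \<eta> pen hs1 hs2 ts qs1 qs2 \<le> objective m x \<eta> pen h1 h2 t0 q1 q2"
    and delta: "0 < \<delta>" "\<delta> < 1"
  shows "\<exists>A \<in> sets M. prob_space.prob M A \<ge> 1 - \<delta> \<and>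
    (\<forall>\<omega>\<in>A.
      risk m x \<eta> (hh1 \<omega>) (hh2 \<omega>) (ht \<omega>)
        \<le> risk m x \<eta> hs1 hs2 ts + (pen 1 qs1 ts + pen 2 qs2 ts) / real m
          + 22 * B^2 * sqrt ((2 * ln (2 * (real m + 1) / \<delta>)
              + (let L = (\<lambda>i q. ln ((q + 3)^2 * N i (eps i (real_of_int \<lceil>q\<rceil>)) (real_of_int \<lceil>q\<rceil>)))
                 in L 1 (hq1 \<omega>) + L 1 qs1 + L 2 (hq2 \<omega>) + L 2 qs2)) / real m))"
  proof -
  interpret P: prob_space M by (rule M)
  show ?thesis
  proof (cases "m = 0")
    case True
    have "\<forall>\<omega>\<in>space M. risk m x \<eta> (hh1 \<omega>) (hh2 \<omega>) (ht \<omega>) \<le> risk m x \<eta> hs1 hs2 ts + (pen 1 qs1 ts + pen 2 qs2 ts) / real m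
          + 22 * B^2 * sqrt ((2 * ln (2 * (real m + 1) / \<delta>)
              + (let L = (\<lambda>i q. ln ((q + 3)^2 * N i (eps i (real_of_int \<lceil>q\<rceil>)) (real_of_int \<lceil>q\<rceil>)))
                 in L 1 (hq1 \<omega>) + L 1 qs1 + L 2 (hq2 \<omega>) + L 2 qs2)) / real m)"
      using True by (simp add: risk_def)
    moreover have "P.prob (space M) \<ge> 1 - \<delta>" using delta P.prob_space by simp
    ultimately show ?thesis by blast
  next
    case False
    then have m: "m > 0" by simp
    have Bpos: "B > 0" using B by simp
    have Yrv: "Y t \<in> borel_measurable M" if "t \<in> {1..m}" for t
      using indep that unfolding P.indep_vars_def by auto
    have Yabs: "\<bar>Y t \<omega>\<bar> \<le> B" if "t \<in> {1..m}" "\<omega> \<in> space M" for t \<omega>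
      using Ybound[OF that] by (simp add: abs_le_iff)
    have etab: "\<bar>\<eta> t\<bar> \<le> B" if t: "t \<in> {1..m}" for t
    proof -
      have int: "integrable M (Y t)"
        by (rule P.integrable_const_bound[where B=B]) (use Yabs[OF t] Yrv[OF t] in \<open>auto intro!: AE_I2\<close>)
      have "P.expectation (Y t) \<le> B"
        by (rule P.integral_le_const[OF int]) (use Ybound[OF t] in \<open>auto intro!: AE_I2\<close>)
      moreover have "- B \<le> P.expectation (Y t)"
        by (rule P.integral_ge_const[OF int]) (use Ybound[OF t] in \<open>auto intro!: AE_I2\<close>)
      ultimately show ?thesis using eta[OF t] by (simp add: abs_le_iff)
    qed
    define NN where "NN = (\<lambda>i (k::nat). N i (eps i (real k)) (real k))"
    define isC where "isC = (\<lambda>i t0 (k::nat) C. is_cover m x (eps i (real k)) (H i t0 (real k)) C \<and> finite C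
          \<and> card C = min_cover_card m x (eps i (real k)) (H i t0 (real k)))"
    define C where "C = (\<lambda>i t0 k. SOME C. isC i t0 k C)"
    have C_ok: "isC i t0 k (C i t0 k)" if it: "i \<in> {1,2}" "t0 \<in> {1..m+1}" for i t0 k
    proof -
      have e: "eps i (real k) > 0" using eps_pos[OF it(1), of "real k"] by simp
      obtain C0 where "is_cover m x (eps i (real k)) (H i t0 (real k)) C0" "finite C0"
        using cover_finite[OF it, of "real k", OF _ e] by auto
      then have "\<exists>n C. is_cover m x (eps i (real k)) (H i t0 (real k)) C \<and> finite C \<and> card C = n" by blast
      then have "\<exists>C. is_cover m x (eps i (real k)) (H i t0 (real k)) C \<and> finite C \<and> card C = min_cover_card m x (eps i (real k)) (H i t0 (real k))"
        unfolding min_cover_card_def by (rule LeastI_ex)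
      then show ?thesis unfolding C_def isC_def by (rule someI_ex)
    qed
    have C_sub: "C i t0 k \<subseteq> H i t0 (real k)" and C_fin: "finite (C i t0 k)"
      and C_cov: "\<And>h. h \<in> H i t0 (real k) \<Longrightarrow> \<exists>g\<in>C i t0 k. rho_m m x h g \<le> eps i (real k)"
      and C_card: "real (card (C i t0 k)) \<le> NN i k"
      if it: "i \<in> {1,2}" "t0 \<in> {1..m+1}" for i t0 k
    proof -
      have c: "isC i t0 k (C i t0 k)" by (rule C_ok[OF it])
      then show "C i t0 k \<subseteq> H i t0 (real k)" "finite (C i t0 k)"
        "\<And>h. h \<in> H i t0 (real k) \<Longrightarrow> \<exists>g\<in>C i t0 k. rho_m m x h g \<le> eps i (real k)"
        unfolding isC_def is_cover_def by auto
      have e: "eps i (real k) > 0" using eps_pos[OF it(1), of "real k"] by simp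
      show "real (card (C i t0 k)) \<le> NN i k" using c N_ge[OF it, of "real k", OF _ e]
        unfolding isC_def NN_def by simp
    qed
    have NN_gt1: "NN i k > 1" if i: "i \<in> {1,2}" for i k
    proof -
      have e: "0 < eps i (real k)" using eps_pos[OF i, of "real k"] by simp
      have "eps i (real k) \<le> B * sqrt (ln (NN i k) / real m)" using eps_le[OF i, of "real k"] by (simp add: NN_def)
      then have "0 < B * sqrt (ln (NN i k) / real m)" using e by linarith
      then have lnpos: "ln (NN i k) > 0" using Bpos m by (simp add: zero_less_mult_iff zero_less_divide_iff)
      have "NN i k \<ge> 0" using N_ge[OF i, of 1 "real k" "eps i (real k)"] e by (simp add: NN_def)
      then show ?thesis using lnpos
        by (metis ln_0 ln_le_zero_iff order_less_irrefl linorder_not_le order_le_less)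
    qed
    define lam where "lam = ln (2 * (real m + 1) / \<delta>)"
    define ell where "ell = (\<lambda>i k. ln (4 * (real m + 1) * (real k + 2)^2 * NN i k / \<delta>))"
    define thr where "thr = (\<lambda>i k. B^2 * sqrt (2 * real m * ell i k))"
    define II where "II = (\<lambda>i t0. if i = (1::nat) then {1..<t0} else {t0..m})"
    define E where "E = (\<lambda>i t0 k g. {\<omega> \<in> space M. thr i k \<le> \<bar>(\<Sum>t\<in>II i t0. g (x t) * Y t \<omega>) - (\<Sum>t\<in>II i t0. g (x t) * \<eta> t)\<bar>})"
    define Ei where "Ei = (\<lambda>(i,t0,k). \<Union>g\<in>C i t0 k. E i t0 k g)"
    define J where "J = {1,2::nat} \<times> {1..m+1} \<times> (UNIV :: nat set)"
    define Bad where "Bad = (\<Union>j\<in>J. Ei j)"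
    define A where "A = space M - Bad"
    have II_sub: "II i t0 \<subseteq> {1..m}" if "t0 \<in> {1..m+1}" for i t0
      using that unfolding II_def by auto
    have ell_pos: "ell i k > 0" if i: "i \<in> {1,2}" for i k
    proof -
      have a: "(1::real) \<le> 4 * (real m + 1)" by simp
      have b: "(1::real) \<le> (real k + 2)^2" using one_le_power[of "real k + 2" 2] by simp
      have ab: "1 \<le> 4 * (real m + 1) * (real k + 2)^2" using mult_mono[OF a b] by simp
      have N1: "1 < NN i k" by (rule NN_gt1[OF i])
      have "NN i k \<le> 4 * (real m + 1) * (real k + 2)^2 * NN i k"
        using mult_right_mono[OF ab, of "NN i k"] N1 by simp
      then have "1 < 4 * (real m + 1) * (real k + 2)^2 * NN i k" using N1 by linarith
      also have "\<dots> \<le> 4 * (real m + 1) * (real k + 2)^2 * NN i k / \<delta>"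
      proof -
        have "0 \<le> 4 * (real m + 1) * (real k + 2)^2 * NN i k" using N1 by simp
        then have "4 * (real m + 1) * (real k + 2)^2 * NN i k * \<delta> \<le> 4 * (real m + 1) * (real k + 2)^2 * NN i k"
          using delta by (intro mult_left_le) auto
        then show ?thesis using delta by (simp add: le_divide_eq)
      qed
      finally show ?thesis unfolding ell_def by simp
    qed
    have E_sets: "E i t0 k g \<in> sets M" if t0: "t0 \<in> {1..m+1}" for i t0 k g
    proof -
      have [measurable]: "(\<lambda>\<omega>. \<Sum>t\<in>II i t0. g (x t) * Y t \<omega>) \<in> borel_measurable M"
        by (intro borel_measurable_sum borel_measurable_times borel_measurable_const) (use Yrv II_sub[OF t0, of i] in blast)
      show ?thesis unfolding E_def by measurable
    qed
    have E_prob: "P.prob (E i t0 k g) \<le> \<delta> / (2 * (real m + 1) * (real k + 2)^2 * NN i k)"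
      if it: "i \<in> {1,2}" "t0 \<in> {1..m+1}" and g: "g \<in> C i t0 k" for i t0 k g
    proof -
      have gb: "\<bar>g z\<bar> \<le> B" for z using Hrange[OF it, of "real k" g z] C_sub[OF it, of k] g by (auto simp: abs_le_iff)
      have fin: "finite (II i t0)" using finite_subset[OF II_sub[OF it(2), of i]] by simp
      have cI: "card (II i t0) \<le> m" using card_mono[OF _ II_sub[OF it(2), of i]] by simp
      have "E i t0 k g = {\<omega> \<in> space M. B\<^sup>2 * sqrt (2 * real m * ell i k) \<le> \<bar>(\<Sum>t\<in>II i t0. g (x t) * Y t \<omega>) - (\<Sum>t\<in>II i t0. g (x t) * P.expectation (Y t))\<bar>}"
      proof -
        have "(\<Sum>t\<in>II i t0. g (x t) * \<eta> t) = (\<Sum>t\<in>II i t0. g (x t) * P.expectation (Y t))"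
          using eta II_sub[OF it(2), of i] by (intro sum.cong) auto
        then show ?thesis unfolding E_def thr_def by simp
      qed
      also have "P.prob \<dots> \<le> 2 * exp (- ell i k)"
        by (rule P.hoeff_single[OF fin indep II_sub[OF it(2), of i]]) (use Yabs gb Bpos cI m ell_pos[OF it(1)] II_sub[OF it(2), of i] in auto)
      also have "2 * exp (- ell i k) = \<delta> / (2 * (real m + 1) * (real k + 2)^2 * NN i k)"
      proof -
        have pos: "4 * (real m + 1) * (real k + 2)^2 * NN i k / \<delta> > 0" using delta NN_gt1[OF it(1), of k] by simp
        have "exp (- ell i k) = inverse (4 * (real m + 1) * (real k + 2)^2 * NN i k / \<delta>)"
          unfolding ell_def exp_minus using pos by simp
        also have "\<dots> = \<delta> / (4 * ((real m + 1) * (real k + 2)^2 * NN i k))"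
          by (simp add: inverse_divide mult.assoc)
        finally have ex: "exp (- ell i k) = \<delta> / (4 * ((real m + 1) * (real k + 2)^2 * NN i k))" .
        have Zp: "(real m + 1) * (real k + 2)^2 * NN i k > 0" using NN_gt1[OF it(1), of k] by simp
        have "2 * (\<delta> / (4 * ((real m + 1) * (real k + 2)^2 * NN i k))) = \<delta> / (2 * ((real m + 1) * (real k + 2)^2 * NN i k))"
          using Zp by simp
        also have "\<dots> = \<delta> / (2 * (real m + 1) * (real k + 2)^2 * NN i k)" by (simp add: mult.assoc)
        finally show ?thesis unfolding ex .
      qed
      finally show ?thesis .
    qed
    have Ei_sets: "Ei j \<in> sets M" if "j \<in> J" for j
      using that E_sets C_fin unfolding Ei_def J_def by (auto intro!: sets.finite_UN)
    have Ei_prob: "P.prob (Ei (i,t0,k)) \<le> \<delta> / (2 * (real m + 1) * (real k + 2)^2)"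
      if it: "i \<in> {1,2}" "t0 \<in> {1..m+1}" for i t0 k
    proof -
      have "P.prob (Ei (i,t0,k)) \<le> (\<Sum>g\<in>C i t0 k. P.prob (E i t0 k g))"
        unfolding Ei_def using C_fin[OF it] E_sets[OF it(2)] by (simp add: measure_UNION_le)
      also have "\<dots> \<le> (\<Sum>g\<in>C i t0 k. \<delta> / (2 * (real m + 1) * (real k + 2)^2 * NN i k))"
        by (intro sum_mono E_prob it)
      also have "\<dots> = real (card (C i t0 k)) * (\<delta> / (2 * (real m + 1) * (real k + 2)^2 * NN i k))" by simp
      also have "\<dots> \<le> NN i k * (\<delta> / (2 * (real m + 1) * (real k + 2)^2 * NN i k))"
        using C_card[OF it, of k] delta by (intro mult_right_mono) auto
      also have "\<dots> = \<delta> / (2 * (real m + 1) * (real k + 2)^2)" using NN_gt1[OF it(1), of k] by simp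
      finally show ?thesis .
    qed
    define f where "f = (\<lambda>(i::nat,t0::nat,k::nat). \<delta> / (2 * (real m + 1) * (real k + 2)^2))"
    have Bad_fm: "Bad \<in> fmeasurable M" and Bad_prob: "P.prob Bad \<le> \<delta>"
    proof -
      have cJ: "countable J" unfolding J_def by simp
      have fm: "Ei j \<in> fmeasurable M" if "j \<in> J" for j
        using Ei_sets[OF that] by (simp add: P.fmeasurable_eq_sets)
      have bound: "measure M (\<Union>j\<in>J'. Ei j) \<le> \<delta>" if J': "J' \<subseteq> J" "finite J'" for J'
      proof -
        obtain K where K: "(\<lambda>j. snd (snd j)) ` J' \<subseteq> {..<K}"
          using finite_nat_bounded[of "(\<lambda>j. snd (snd j)) ` J'"] J' by auto
        have J'K: "J' \<subseteq> {1,2} \<times> {1..m+1} \<times> {..<K}" using J' K unfolding J_def by force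
        have "measure M (\<Union>j\<in>J'. Ei j) \<le> (\<Sum>j\<in>J'. measure M (Ei j))"
          using J' Ei_sets by (intro measure_UNION_le) auto
        also have "\<dots> \<le> (\<Sum>j\<in>J'. f j)"
        proof (rule sum_mono)
          fix j assume "j \<in> J'"
          then obtain i t0 k where j: "j = (i,t0,k)" "i \<in> {1,2}" "t0 \<in> {1..m+1}" using J' unfolding J_def by auto
          show "measure M (Ei j) \<le> f j" unfolding j(1) f_def using Ei_prob[OF j(2,3)] by simp
        qed
        also have "\<dots> \<le> (\<Sum>j\<in>{1,2} \<times> {1..m+1} \<times> {..<K}. f j)"
          by (rule sum_mono2[OF _ J'K]) (use delta in \<open>auto simp: f_def\<close>)
        also have "\<dots> = (\<Sum>i\<in>{1::nat,2}. \<Sum>p\<in>{1..m+1} \<times> {..<K}. (\<lambda>(t0::nat,k::nat). (\<delta>::real) / (2 * (real m + 1) * (real k + 2)^2)) p)"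
          unfolding f_def by (subst sum.cartesian_product) (simp add: split_def)
        also have "\<dots> = (\<Sum>i\<in>{1::nat,2}. \<Sum>t0\<in>{1..m+1}. \<Sum>k<K. (\<delta>::real) / (2 * (real m + 1) * (real k + 2)^2))"
          by (subst sum.cartesian_product) (simp add: split_def)
        also have "\<dots> = 2 * (real m + 1) * (\<Sum>k<K. \<delta> / (2 * (real m + 1) * (real k + 2)^2))" by simp
        also have "\<dots> = (\<Sum>k<K. 2*(real m+1)*(\<delta>/(2*(real m+1)*(real k+2)^2)))"
          by (rule sum_distrib_left)
        also have "\<dots> = (\<Sum>k<K. \<delta> * (1/(real k+2)^2))"
          by (intro sum.cong refl mult_cancel_frac_aux) simp
        also have "\<dots> = \<delta> * (\<Sum>k<K. 1 / (real k + 2)^2)" by (rule sum_distrib_left[symmetric])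
        also have "\<dots> \<le> \<delta> * 1"
        proof -
          have "(\<Sum>k<K. 1 / (real k + 2)^2) \<le> 1" 
          proof -
            have "0 \<le> 1 / (real K + 1)" by simp
            then show ?thesis using tele[of K] by linarith
          qed
          then show ?thesis using delta by (intro mult_left_mono) auto
        qed
        finally show ?thesis by simp
      qed
      show "Bad \<in> fmeasurable M" unfolding Bad_def by (rule fmeasurable_UN_bound[OF cJ fm bound])
      show "P.prob Bad \<le> \<delta>" unfolding Bad_def by (rule measure_UN_bound[OF cJ fm bound])
    qed
    have A_sets: "A \<in> sets M" unfolding A_def using Bad_fm by auto
    have A_prob: "P.prob A \<ge> 1 - \<delta>"
    proof -
      have "P.prob A = 1 - P.prob Bad" unfolding A_def using Bad_fm by (simp add: P.prob_compl)
      then show ?thesis using Bad_prob by simp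
    qed
    define D where "D = (\<lambda>i (q::real). thr i (nat \<lceil>q\<rceil>) + 2 * B^2 * sqrt (real m * ln (NN i (nat \<lceil>q\<rceil>))))"
    have Zb: "\<bar>\<Sum>t\<in>II i t0. h (x t) * (Y t \<omega> - \<eta> t)\<bar> \<le> D i q"
      if \<omega>: "\<omega> \<in> A" and it: "i \<in> {1,2}" "t0 \<in> {1..m+1}" and q: "q \<ge> 0" and h: "h \<in> H i t0 q" for \<omega> i t0 q h
    proof -
      define k where "k = nat \<lceil>q\<rceil>"
      have qk: "q \<le> real k" unfolding k_def by (simp add: real_nat_ceiling_ge)
      have "H i t0 q \<subseteq> H i t0 (real k)"
      proof (cases "q < real k")
        case True then show ?thesis using Hmono[OF it q] by blast
      next
        case False then have "q = real k" using qk by simp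
        then show ?thesis by simp
      qed
      then have hk: "h \<in> H i t0 (real k)" using h by blast
      then obtain g where g: "g \<in> C i t0 k" and rho: "rho_m m x h g \<le> eps i (real k)"
        using C_cov[OF it(1) it(2) hk] by blast
      have \<omega>s: "\<omega> \<in> space M" using \<omega> unfolding A_def by simp
      have "\<bar>\<Sum>t\<in>II i t0. h (x t) * (Y t \<omega> - \<eta> t)\<bar> \<le> \<bar>\<Sum>t\<in>II i t0. g (x t) * (Y t \<omega> - \<eta> t)\<bar> + real m * eps i (real k) * (2 * B)"
      proof (rule approx[OF II_sub[OF it(2), of i] rho])
        fix t assume "t \<in> II i t0"
        then have t: "t \<in> {1..m}" using II_sub[OF it(2), of i] by auto
        show "\<bar>Y t \<omega> - \<eta> t\<bar> \<le> 2 * B" using Yabs[OF t \<omega>s] etab[OF t] by linarith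
      qed (use Bpos in simp)
      also have "\<bar>\<Sum>t\<in>II i t0. g (x t) * (Y t \<omega> - \<eta> t)\<bar> < thr i k"
      proof -
        have "(i,t0,k) \<in> J" using it unfolding J_def by auto
        then have "\<omega> \<notin> E i t0 k g" using \<omega> g unfolding A_def Bad_def Ei_def by auto
        then have "\<not> thr i k \<le> \<bar>(\<Sum>t\<in>II i t0. g (x t) * Y t \<omega>) - (\<Sum>t\<in>II i t0. g (x t) * \<eta> t)\<bar>"
          using \<omega>s unfolding E_def by auto
        moreover have "(\<Sum>t\<in>II i t0. g (x t) * (Y t \<omega> - \<eta> t)) = (\<Sum>t\<in>II i t0. g (x t) * Y t \<omega>) - (\<Sum>t\<in>II i t0. g (x t) * \<eta> t)"
          by (simp add: right_diff_distrib sum_subtractf)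
        ultimately show ?thesis by simp
      qed
      also have "real m * eps i (real k) * (2 * B) \<le> 2 * B^2 * sqrt (real m * ln (NN i k))"
      proof -
        have "eps i (real k) \<le> B * sqrt (ln (NN i k) / real m)" using eps_le[OF it(1), of "real k"] by (simp add: NN_def)
        then have "real m * eps i (real k) * (2 * B) \<le> real m * (B * sqrt (ln (NN i k) / real m)) * (2 * B)"
          using m Bpos by (intro mult_right_mono mult_left_mono) auto
        also have "real m * sqrt (ln (NN i k) / real m) = sqrt (real m * ln (NN i k))"
        proof -
          have "real m * ln (NN i k) = (real m)^2 * (ln (NN i k) / real m)" using m by (simp add: power2_eq_square)
          then have "sqrt (real m * ln (NN i k)) = sqrt ((real m)^2) * sqrt (ln (NN i k) / real m)" by (simp only: real_sqrt_mult)
          then show ?thesis by simp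
        qed
        then have "real m * (B * sqrt (ln (NN i k) / real m)) * (2 * B) = 2 * B^2 * sqrt (real m * ln (NN i k))"
          by (simp add: power2_eq_square algebra_simps)
        finally show ?thesis .
      qed
      finally show ?thesis unfolding D_def k_def by simp
    qed
    have L_eq: "ln ((q + 3)^2 * N i (eps i (real_of_int \<lceil>q\<rceil>)) (real_of_int \<lceil>q\<rceil>)) = ln ((q + 3)^2 * NN i (nat \<lceil>q\<rceil>))"
      if "q \<ge> 0" for i q
    proof -
      have "real_of_int \<lceil>q\<rceil> = real (nat \<lceil>q\<rceil>)" using that by simp
      then show ?thesis unfolding NN_def by simp
    qed
    have lam_ge: "lam \<ge> ln 2"
    proof -
      have "2 \<le> 2 * (real m + 1)" by simp
      also have "\<dots> \<le> 2 * (real m + 1) / \<delta>"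
      proof -
        have "2 * (real m + 1) * \<delta> \<le> 2 * (real m + 1)" using delta by (intro mult_left_le) auto
        then show ?thesis using delta by (simp add: le_divide_eq)
      qed
      finally have "2 \<le> 2 * (real m + 1) / \<delta>" .
      then show ?thesis unfolding lam_def by simp
    qed
    have ell_le: "ell i (nat \<lceil>q\<rceil>) \<le> ln 2 + lam + ln ((q + 3)^2 * NN i (nat \<lceil>q\<rceil>))"
      and n_le: "0 \<le> ln (NN i (nat \<lceil>q\<rceil>))" "ln (NN i (nat \<lceil>q\<rceil>)) \<le> ln ((q + 3)^2 * NN i (nat \<lceil>q\<rceil>))"
      if i: "i \<in> {1,2}" and q: "q \<ge> 0" for i q
    proof -
      define k where "k = nat \<lceil>q\<rceil>"
      have N1: "NN i k > 1" by (rule NN_gt1[OF i])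
      have kq: "real k + 2 \<le> q + 3" proof -
        have "real k = real_of_int \<lceil>q\<rceil>" unfolding k_def using q by simp
        moreover have "real_of_int \<lceil>q\<rceil> \<le> q + 1" by (rule of_int_ceiling_le_add_one)
        ultimately show ?thesis by linarith
      qed
      have "ell i k = ln (2 * (2 * (real m + 1) / \<delta>) * ((real k + 2)^2 * NN i k))"
        unfolding ell_def by (simp add: field_simps)
      also have "\<dots> \<le> ln (2 * (2 * (real m + 1) / \<delta>) * ((q + 3)^2 * NN i k))"
      proof -
        have "(real k + 2)^2 \<le> (q + 3)^2" using kq by (intro power_mono) auto
        then have "(real k + 2)^2 * NN i k \<le> (q + 3)^2 * NN i k" using N1 by (intro mult_right_mono) auto
        then show ?thesis using delta N1 by (intro ln_mono mult_left_mono) auto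
      qed
      also have "\<dots> = ln 2 + lam + ln ((q + 3)^2 * NN i k)"
      proof -
        have a: "2 * (real m + 1) / \<delta> > 0" using delta by simp
        have b: "(q + 3)^2 * NN i k > 0" using N1 q by simp
        have "ln (2 * (2 * (real m + 1) / \<delta>) * ((q + 3)^2 * NN i k)) = ln (2 * (2 * (real m + 1) / \<delta>)) + ln ((q + 3)^2 * NN i k)"
          using a b N1 by (intro ln_mult_pos mult_pos_pos) auto
        also have "ln (2 * (2 * (real m + 1) / \<delta>)) = ln 2 + ln (2 * (real m + 1) / \<delta>)"
          by (rule ln_mult_pos) (use a in auto)
        finally show ?thesis unfolding lam_def .
      qed
      finally show "ell i (nat \<lceil>q\<rceil>) \<le> ln 2 + lam + ln ((q + 3)^2 * NN i (nat \<lceil>q\<rceil>))" unfolding k_def .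
      show "0 \<le> ln (NN i (nat \<lceil>q\<rceil>))" using N1 unfolding k_def by simp
      have "NN i k \<le> (q + 3)^2 * NN i k"
      proof -
        have "1 \<le> (q + 3)^2" using q one_le_power[of "q + 3" 2] by simp
        then show ?thesis using N1 by (simp add: mult_le_cancel_right1)
      qed
      moreover have "0 < (q + 3)^2 * NN i k" using N1 q by simp
      ultimately show "ln (NN i (nat \<lceil>q\<rceil>)) \<le> ln ((q + 3)^2 * NN i (nat \<lceil>q\<rceil>))"
        unfolding k_def[symmetric] using N1 by (subst ln_le_cancel_iff) auto
    qed
    have main: "risk m x \<eta> (hh1 \<omega>) (hh2 \<omega>) (ht \<omega>)
        \<le> risk m x \<eta> hs1 hs2 ts + (pen 1 qs1 ts + pen 2 qs2 ts) / real m
          + 22 * B^2 * sqrt ((2 * ln (2 * (real m + 1) / \<delta>)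
              + (let L = (\<lambda>i q. ln ((q + 3)^2 * N i (eps i (real_of_int \<lceil>q\<rceil>)) (real_of_int \<lceil>q\<rceil>)))
                 in L 1 (hq1 \<omega>) + L 1 qs1 + L 2 (hq2 \<omega>) + L 2 qs2)) / real m)"
      if \<omega>: "\<omega> \<in> A" for \<omega>
    proof -
      have \<omega>s: "\<omega> \<in> space M" using \<omega> unfolding A_def by simp
      have hf: "feasible m H (hh1 \<omega>) (hh2 \<omega>) (ht \<omega>) (hq1 \<omega>) (hq2 \<omega>)" by (rule hat_feas[OF \<omega>s])
      then have ht: "ht \<omega> \<in> {1..m+1}" and hq: "0 \<le> hq1 \<omega>" "0 \<le> hq2 \<omega>"
        and hh: "hh1 \<omega> \<in> H 1 (ht \<omega>) (hq1 \<omega>)" "hh2 \<omega> \<in> H 2 (ht \<omega>) (hq2 \<omega>)"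
        unfolding feasible_def by auto
      have ts: "ts \<in> {1..m+1}" and qs: "0 \<le> qs1" "0 \<le> qs2"
        and hs: "hs1 \<in> H 1 ts qs1" "hs2 \<in> H 2 ts qs2"
        using star_feas unfolding feasible_def by auto
      define y where "y = (\<lambda>t. Y t \<omega>)"
      define c where "c = (\<Sum>t\<in>{1..m}. y t^2 - \<eta> t^2)"
      define Zh where "Zh = (\<Sum>t\<in>{1..<ht \<omega>}. hh1 \<omega> (x t)*(y t - \<eta> t)) + (\<Sum>t\<in>{ht \<omega>..m}. hh2 \<omega> (x t)*(y t - \<eta> t))"
      define Zs where "Zs = (\<Sum>t\<in>{1..<ts}. hs1 (x t)*(y t - \<eta> t)) + (\<Sum>t\<in>{ts..m}. hs2 (x t)*(y t - \<eta> t))"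
      have dh: "real m * risk m x \<eta> (hh1 \<omega>) (hh2 \<omega>) (ht \<omega>) = real m * risk m x y (hh1 \<omega>) (hh2 \<omega>) (ht \<omega>) - c + 2 * Zh"
        unfolding c_def Zh_def by (rule risk_decomp[OF m ht])
      have ds: "real m * risk m x \<eta> hs1 hs2 ts = real m * risk m x y hs1 hs2 ts - c + 2 * Zs"
        unfolding c_def Zs_def by (rule risk_decomp[OF m ts])
      have opt: "real m * risk m x y (hh1 \<omega>) (hh2 \<omega>) (ht \<omega>) + pen 1 (hq1 \<omega>) (ht \<omega>) + pen 2 (hq2 \<omega>) (ht \<omega>)
          \<le> real m * risk m x y hs1 hs2 ts + pen 1 qs1 ts + pen 2 qs2 ts"
        using hat_min[OF \<omega>s star_feas] unfolding objective_def y_def .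
      have pn: "pen 1 (hq1 \<omega>) (ht \<omega>) \<ge> 0" "pen 2 (hq2 \<omega>) (ht \<omega>) \<ge> 0"
        using pen_nonneg[of 1 "ht \<omega>" "hq1 \<omega>"] pen_nonneg[of 2 "ht \<omega>" "hq2 \<omega>"] ht hq by auto
      have Hf: "real m * risk m x \<eta> (hh1 \<omega>) (hh2 \<omega>) (ht \<omega>) \<le> real m * risk m x \<eta> hs1 hs2 ts + (pen 1 qs1 ts + pen 2 qs2 ts) + 2 * (Zh - Zs)"
      proof -
        have "real m * risk m x y (hh1 \<omega>) (hh2 \<omega>) (ht \<omega>) \<le> real m * risk m x y hs1 hs2 ts + pen 1 qs1 ts + pen 2 qs2 ts"
          using opt pn by linarith
        then show ?thesis unfolding dh using ds by (simp add: algebra_simps)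
      qed
      have R1: "risk m x \<eta> (hh1 \<omega>) (hh2 \<omega>) (ht \<omega>) \<le> risk m x \<eta> hs1 hs2 ts + (pen 1 qs1 ts + pen 2 qs2 ts) / real m + 2 / real m * (Zh - Zs)"
        by (rule div_step[OF _ Hf]) (use m in simp)
      have Zh_b: "\<bar>Zh\<bar> \<le> D 1 (hq1 \<omega>) + D 2 (hq2 \<omega>)"
      proof -
        have a: "\<bar>\<Sum>t\<in>{1..<ht \<omega>}. hh1 \<omega> (x t)*(y t - \<eta> t)\<bar> \<le> D 1 (hq1 \<omega>)"
          using Zb[OF \<omega> _ ht hq(1) hh(1)] unfolding II_def y_def by simp
        have b: "\<bar>\<Sum>t\<in>{ht \<omega>..m}. hh2 \<omega> (x t)*(y t - \<eta> t)\<bar> \<le> D 2 (hq2 \<omega>)"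
          using Zb[OF \<omega> _ ht hq(2) hh(2)] unfolding II_def y_def by simp
        show ?thesis unfolding Zh_def using a b by linarith
      qed
      have Zs_b: "\<bar>Zs\<bar> \<le> D 1 qs1 + D 2 qs2"
      proof -
        have a: "\<bar>\<Sum>t\<in>{1..<ts}. hs1 (x t)*(y t - \<eta> t)\<bar> \<le> D 1 qs1"
          using Zb[OF \<omega> _ ts qs(1) hs(1)] unfolding II_def y_def by simp
        have b: "\<bar>\<Sum>t\<in>{ts..m}. hs2 (x t)*(y t - \<eta> t)\<bar> \<le> D 2 qs2"
          using Zb[OF \<omega> _ ts qs(2) hs(2)] unfolding II_def y_def by simp
        show ?thesis unfolding Zs_def using a b by linarith
      qed
      have "2 / real m * (Zh - Zs) \<le> 2 / real m * ((D 1 (hq1 \<omega>) + D 1 qs1) + (D 2 (hq2 \<omega>)) + D 2 qs2)"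
        using Zh_b Zs_b m by (intro mult_left_mono) auto
      also have "\<dots> \<le> 22 * B^2 * sqrt ((2 * lam + (ln ((hq1 \<omega> + 3)^2 * NN 1 (nat \<lceil>hq1 \<omega>\<rceil>)) + ln ((qs1 + 3)^2 * NN 1 (nat \<lceil>qs1\<rceil>))
            + ln ((hq2 \<omega> + 3)^2 * NN 2 (nat \<lceil>hq2 \<omega>\<rceil>)) + ln ((qs2 + 3)^2 * NN 2 (nat \<lceil>qs2\<rceil>)))) / real m)"
        unfolding D_def thr_def
        by (rule final_arith[OF _ Bpos lam_ge ell_le[of 1 "hq1 \<omega>"] ell_le[of 1 qs1] ell_le[of 2 "hq2 \<omega>"] ell_le[of 2 qs2]
              n_le[of 1 "hq1 \<omega>"] n_le[of 1 qs1] n_le[of 2 "hq2 \<omega>"] n_le[of 2 qs2]]) (use m hq qs in auto)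
      finally have X: "2 / real m * (Zh - Zs) \<le> \<dots>" .
      have Leq: "(2 * lam + (ln ((hq1 \<omega> + 3)^2 * NN 1 (nat \<lceil>hq1 \<omega>\<rceil>)) + ln ((qs1 + 3)^2 * NN 1 (nat \<lceil>qs1\<rceil>))
            + ln ((hq2 \<omega> + 3)^2 * NN 2 (nat \<lceil>hq2 \<omega>\<rceil>)) + ln ((qs2 + 3)^2 * NN 2 (nat \<lceil>qs2\<rceil>))))
          = (2 * ln (2 * (real m + 1) / \<delta>)
              + (let L = (\<lambda>i q. ln ((q + 3)^2 * N i (eps i (real_of_int \<lceil>q\<rceil>)) (real_of_int \<lceil>q\<rceil>)))
                 in L 1 (hq1 \<omega>) + L 1 qs1 + L 2 (hq2 \<omega>) + L 2 qs2))"
        by (simp only: Let_def lam_def L_eq[OF hq(1)] L_eq[OF qs(1)] L_eq[OF hq(2)] L_eq[OF qs(2)])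
      show ?thesis using R1 X unfolding Leq by linarith
    qed
    show ?thesis using A_sets A_prob main by blast
  qed
qed

end
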